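(* Let $m\in\mathbb N$, let $r_1,t_1,\dots,r_m,t_m\in\mathbb N$ and let $\tau_1,\dots,\tau_m\in T_Q$ be pairwise distinct, such that each $r_i$ is a position of the trace $\emptyset^{t_i}\cdot\overline{\tau_i}\cdot\mathrm{Enum}_{-\tau_i}$. Let $A\subseteq\mathcal A^{\mathsf G}$, let $B=\{(\emptyset^{t_i}\cdot\overline{\tau_i}\cdot\mathrm{Enum}_{-\tau_i})^{(r_i)}: i\in[1,m]\}$ and $C=\{(a,b)\in A\times B: a\approx b\}$. Then every deduction tree for $\langle A,B\rangle$ has size at least $|C|+1$.
   Context: Fix $n\ge1$, atomic propositions $AP=\{\tilde p,\tilde q\}\cup P\cup Q$ with $P=\{p_1,\dots,p_n\}$, $Q=\{q_1,\dots,q_n\}$ (all distinct), $\Sigma=2^{AP}$; $\emptyset$ denotes the letter with no propositions. For $\sigma=w_0\cdots w_m$, $\sigma^{(j)}=w_j\cdots w_m$. Let $\alpha(n)=2^{n+1}(n+2)^2$, $T_P=\{\tau\in\Sigma:\tilde p\in\tau\subseteq P\cup\{\tilde p\}\}$, $T_Q=\{\tau\in\Sigma:\tilde q\in\tau\subseteq Q\cup\{\tilde q\}\}$, and for $\tau\in T_Q$ let $\overline\tau\in T_P$ satisfy $p_i\in\overline\tau$ iff $q_i\in\tau$. Fix a strict total order $\prec$ on $T_Q$; $\mathrm{Enum}$ is the unique word in $(\emptyset^{\alpha(n)}\cdot T_Q)^{2^n}\cdot\emptyset^{\alpha(n)}$ listing each element of $T_Q$ once in increasing $\prec$-order, and $\mathrm{Enum}_{-\tau}$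 is obtained by deleting the position of letter $\tau$ and the $\alpha(n)$ $\emptyset$-positions immediately preceding it. $\mathcal A=\{\emptyset^j\cdot\overline\tau\cdot\mathrm{Enum}:j\in\mathbb N,\tau\in T_Q\}$ and $\mathcal A^{\mathsf G}$ is the set of all suffixes $\sigma^{(j)}$ ($0\le j<|\sigma|$) of traces $\sigma\in\mathcal A$. For $a,b\in\Sigma^+$, $a\approx b$ iff there are $u\in\mathbb N$ and $\rho\in T_Q\cup T_P$ with both $a,b\in\emptyset^u\cdot\rho\cdot\emptyset^{\alpha(n)}\cdot\Sigma^*$. Proof system: for $A,B\subseteq\Sigma^+$, $A^{\mathsf X}=\{\sigma^{(1)}:\sigma\in A,|\sigma|\ge2\}$, $A^{\mathsf G}$ = all suffixes of traces in $A$, a future point for $A$ is $f:A\to\mathbb N$ with $f(\sigma)<|\sigma|$, $A^f=\{\sigma^{(f(\sigma))}:\sigma\in A\}$. For a literal $\alpha$ ($p$ or $\neg p$), write $A\models\alpha$ if $\alpha$ holds at position $0$ of every $\sigma\in A$ and $B\perp\alpha$ if it fails at position $0$ of every $\sigma\in B$. Rules on terms $\langle A,B\rangle$: Atomic: $\langle A,B\rangle$ if $A\models\alpha$, $B\perp\alpha$ for some literal $\alpha$; Or: $\langle A_1\uplus A_2,B\rangle$ from $\langle A_1,B\rangle,\langle A_2,B\rangle$; And: $\langle A,B_1\uplus B_2\rangle$ from $\langle A,B_1\rangle,\langle A,B_2\rangle$; Next: $\langle A,B\rangle$ from $\langle A^{\mathsf X},B^{\mathsf X}\rangle$ if $|A^{\mathsf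 X}|=|A|$; WeakNext: $\langle A,B\rangle$ from $\langle A^{\mathsf X},B^{\mathsf X}\rangle$ if $|B^{\mathsf X}|=|B|$; Future: $\langle A,B\rangle$ from $\langle A^f,B^{\mathsf G}\rangle$, $f$ a future point for $A$; Globally: $\langle A,B\rangle$ from $\langle A^{\mathsf G},B^f\rangle$, $f$ a future point for $B$ ($\uplus$ = disjoint union). A deduction tree for $\langle A,B\rangle$ is a finite tree of rule applications rooted at $\langle A,B\rangle$ with every hypothesis derived; its size is its number of rule applications. *)

theory Defs
  imports Main
begin

(* Atomic propositions: Pt = p~, Qt = q~, P i = p_i, Q i = q_i (only 1 <= i <= n are used) *)
datatype ap = Pt | Qt | P nat | Q nat

type_synonym letter = "ap set"
type_synonym trace = "letter list"   (* traces in Sigma^+ are nonempty lists *)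

definition APs :: "nat \<Rightarrow> ap set" where
  "APs n = {Pt, Qt} \<union> P ` {1..n} \<union> Q ` {1..n}"

definition alpha :: "nat \<Rightarrow> nat" where
  "alpha n = 2 ^ (n + 1) * (n + 2) ^ 2"

definition TP :: "nat \<Rightarrow> letter set" where
  "TP n = {\<tau>. Pt \<in> \<tau> \<and> \<tau> \<subseteq> insert Pt (P ` {1..n})}"

definition TQ :: "nat \<Rightarrow> letter set" where
  "TQ n = {\<tau>. Qt \<in> \<tau> \<and> \<tau> \<subseteq> insert Qt (Q ` {1..n})}"

definition bar :: "letter \<Rightarrow> letter" where
  "bar \<tau> = insert Pt {P i | i. Q i \<in> \<tau>}"

definition enum_list :: "nat \<Rightarrow> (letter \<times> letter) set \<Rightarrow> letter list" where
  "enum_list n lt = (THE xs. distinct xs \<and> set xs = TQ n \<and> sorted_wrt (\<lambda>x y. (x, y) \<in> lt) xs)"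

definition Enum :: "nat \<Rightarrow> (letter \<times> letter) set \<Rightarrow> trace" where
  "Enum n lt = concat (map (\<lambda>\<tau>. replicate (alpha n) {} @ [\<tau>]) (enum_list n lt))
               @ replicate (alpha n) {}"

definition Enum_minus :: "nat \<Rightarrow> (letter \<times> letter) set \<Rightarrow> letter \<Rightarrow> trace" where
  "Enum_minus n lt \<tau> =
     (let e = Enum n lt; k = (THE k. k < length e \<and> e ! k = \<tau>)
      in take (k - alpha n) e @ drop (k + 1) e)"

definition Acal :: "nat \<Rightarrow> (letter \<times> letter) set \<Rightarrow> trace set" where
  "Acal n lt = {replicate j {} @ [bar \<tau>] @ Enum n lt | j \<tau>. \<tau> \<in> TQ n}"

definition suffixes :: "trace set \<Rightarrow> trace set" where
  "suffixes A = {drop j \<sigma> | \<sigma> j. \<sigma> \<in> A \<and> j < length \<sigma>}"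

definition nexts :: "trace set \<Rightarrow> trace set" where
  "nexts A = {drop 1 \<sigma> | \<sigma>. \<sigma> \<in> A \<and> 2 \<le> length \<sigma>}"

definition future_set :: "(trace \<Rightarrow> nat) \<Rightarrow> trace set \<Rightarrow> trace set" where
  "future_set f A = (\<lambda>\<sigma>. drop (f \<sigma>) \<sigma>) ` A"

definition approx :: "nat \<Rightarrow> trace \<Rightarrow> trace \<Rightarrow> bool" where
  "approx n a b = (\<exists>u \<rho> s t. \<rho> \<in> TQ n \<union> TP n \<and>
      a = replicate u {} @ [\<rho>] @ replicate (alpha n) {} @ s \<and>
      b = replicate u {} @ [\<rho>] @ replicate (alpha n) {} @ t)"

datatype literal = Pos ap | Neg ap

fun lit_var :: "literal \<Rightarrow> ap" where
  "lit_var (Pos p) = p" | "lit_var (Neg p) = p"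

fun holds0 :: "literal \<Rightarrow> trace \<Rightarrow> bool" where
  "holds0 (Pos p) \<sigma> = (p \<in> hd \<sigma>)"
| "holds0 (Neg p) \<sigma> = (p \<notin> hd \<sigma>)"

(* ded n A B k : there is a deduction tree for <A,B> of size k (number of rule applications) *)
inductive ded :: "nat \<Rightarrow> trace set \<Rightarrow> trace set \<Rightarrow> nat \<Rightarrow> bool" for n where
  Atomic: "\<lbrakk> lit_var \<alpha> \<in> APs n; \<forall>\<sigma>\<in>A. holds0 \<alpha> \<sigma>; \<forall>\<sigma>\<in>B. \<not> holds0 \<alpha> \<sigma> \<rbrakk>
           \<Longrightarrow> ded n A B 1"
| Or: "\<lbrakk> ded n A1 B k1; ded n A2 B k2; A1 \<inter> A2 = {} \<rbrakk> \<Longrightarrow> ded n (A1 \<union> A2) B (k1 + k2 + 1)"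
| And: "\<lbrakk> ded n A B1 k1; ded n A B2 k2; B1 \<inter> B2 = {} \<rbrakk> \<Longrightarrow> ded n A (B1 \<union> B2) (k1 + k2 + 1)"
| Next: "\<lbrakk> ded n (nexts A) (nexts B) k; card (nexts A) = card A \<rbrakk> \<Longrightarrow> ded n A B (k + 1)"
| WeakNext: "\<lbrakk> ded n (nexts A) (nexts B) k; card (nexts B) = card B \<rbrakk> \<Longrightarrow> ded n A B (k + 1)"
| Future: "\<lbrakk> \<forall>\<sigma>\<in>A. f \<sigma> < length \<sigma>; ded n (future_set f A) (suffixes B) k \<rbrakk> \<Longrightarrow> ded n A B (k + 1)"
| Globally: "\<lbrakk> \<forall>\<sigma>\<in>B. f \<sigma> < length \<sigma>; ded n (suffixes A) (future_set f B) k \<rbrakk> \<Longrightarrow> ded n A B (k + 1)"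

end

theory Submission
  imports Defs
begin


lemma sorted_insert_exists:
  assumes tr: "trans r" and tot: "total_on S r"
  shows "sorted_wrt (\<lambda>x y. (x,y)\<in>r) xs \<Longrightarrow> distinct xs \<Longrightarrow> set xs \<subseteq> S \<Longrightarrow> x \<in> S \<Longrightarrow> x \<notin> set xs
    \<Longrightarrow> \<exists>ys. distinct ys \<and> set ys = insert x (set xs) \<and> sorted_wrt (\<lambda>x y. (x,y)\<in>r) ys"
proof (induction xs)
  case Nil then show ?case by (intro exI[of _ "[x]"]) auto
next
  case (Cons y xs)
  show ?case
  proof (cases "(x,y) \<in> r")
    case True
    then show ?thesis using Cons.prems tr
      by (intro exI[of _ "x#y#xs"]) (auto dest: transD)
  next
    case False
    then have "(y,x) \<in> r" using tot Cons.prems unfolding total_on_def by auto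
    obtain ys where "distinct ys" "set ys = insert x (set xs)" "sorted_wrt (\<lambda>x y. (x,y)\<in>r) ys"
      using Cons by auto
    then show ?thesis using Cons.prems \<open>(y,x) \<in> r\<close>
      by (intro exI[of _ "y#ys"]) auto
  qed
qed

lemma sorted_exists:
  assumes tr: "trans r" and tot: "total_on S r" and fin: "finite S"
  shows "\<exists>ys. distinct ys \<and> set ys = S \<and> sorted_wrt (\<lambda>x y. (x,y)\<in>r) ys"
proof -
  have "\<And>F. finite F \<Longrightarrow> F \<subseteq> S \<Longrightarrow> \<exists>ys. distinct ys \<and> set ys = F \<and> sorted_wrt (\<lambda>x y. (x,y)\<in>r) ys"
  proof -
    fix F :: "'a set" assume "finite F" "F \<subseteq> S"
    then show "\<exists>ys. distinct ys \<and> set ys = F \<and> sorted_wrt (\<lambda>x y. (x,y)\<in>r) ys"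
    proof (induction F rule: finite_induct)
      case empty then show ?case by auto
    next
      case (insert x F)
      then obtain xs where "distinct xs" "set xs = F" "sorted_wrt (\<lambda>x y. (x,y)\<in>r) xs" by auto
      then show ?case using sorted_insert_exists[OF tr tot, of xs x] insert by auto
    qed
  qed
  then show ?thesis using fin by auto
qed

lemma sorted_unique:
  assumes irr: "irrefl r" and tr: "trans r"
  shows "sorted_wrt (\<lambda>x y. (x,y)\<in>r) xs \<Longrightarrow> sorted_wrt (\<lambda>x y. (x,y)\<in>r) ys \<Longrightarrow> distinct xs \<Longrightarrow> distinct ys
    \<Longrightarrow> set xs = set ys \<Longrightarrow> xs = ys"
proof (induction xs arbitrary: ys)
  case Nil then show ?case by auto
next
  case (Cons x xs)
  then obtain y ys' where ys: "ys = y # ys'" by (cases ys) auto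
  have "x = y"
  proof (rule ccontr)
    assume "x \<noteq> y"
    then have "y \<in> set xs" "x \<in> set ys'" using Cons.prems ys by auto
    then have "(x,y) \<in> r" "(y,x) \<in> r" using Cons.prems ys by auto
    then show False using irr tr unfolding irrefl_def by (meson transD)
  qed
  moreover have "set xs = set ys'" using Cons.prems ys \<open>x = y\<close> by auto
  ultimately show ?case using Cons ys by auto
qed

lemma TQ_finite: "finite (TQ n)"
proof -
  have "TQ n \<subseteq> Pow (insert Qt (Q ` {1..n}))" unfolding TQ_def by auto
  then show ?thesis by (rule finite_subset) simp
qed

lemma TQ_card: "card (TQ n) \<le> 2 ^ (n+1)"
proof -
  have "TQ n \<subseteq> Pow (insert Qt (Q ` {1..n}))" unfolding TQ_def by auto
  then have "card (TQ n) \<le> card (Pow (insert Qt (Q ` {1..n})))" by (intro card_mono) auto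
  also have "\<dots> = 2 ^ card (insert Qt (Q ` {1..n}))" by (rule card_Pow[OF finite_insert[THEN iffD2, OF finite_imageI[OF finite_atLeastAtMost]]])
  also have "card (insert Qt (Q ` {1..n})) \<le> n + 1"
    by (metis Suc_eq_plus1 card_atLeastAtMost card_image_le card_insert_le_m1 diff_Suc_1 finite_atLeastAtMost finite_imageI le_SucI zero_less_Suc)
  then have "(2::nat) ^ card (insert Qt (Q ` {1..n})) \<le> 2 ^ (n+1)" by (intro power_increasing) auto
  finally show ?thesis .
qed

lemma enum_list_props:
  assumes "strict_linear_order_on (TQ n) lt"
  shows "distinct (enum_list n lt) \<and> set (enum_list n lt) = TQ n"
proof -
  have tr: "trans lt" and irr: "irrefl lt" and tot: "total_on (TQ n) lt"
    using assms unfolding strict_linear_order_on_def by auto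
  obtain ys where ys: "distinct ys \<and> set ys = TQ n \<and> sorted_wrt (\<lambda>x y. (x,y)\<in>lt) ys"
    using sorted_exists[OF tr tot TQ_finite] by auto
  have "enum_list n lt = ys" unfolding enum_list_def
    by (rule the_equality) (use ys sorted_unique[OF irr tr] in auto)
  then show ?thesis using ys by auto
qed



lemma modh: "d < a+1 \<Longrightarrow> (q*(a+1)+d) mod (a+1) = (d::nat)"
  by (metis mod_mult_self3 mod_less)
lemma divh: "d < a+1 \<Longrightarrow> (q*(a+1)+d) div (a+1) = (q::nat)"
  by (subst div_mult_self3) auto

lemma concat_blocks_len: "length (concat (map (\<lambda>x. replicate a {} @ [x]) ys)) = length ys * (a+1)"
  by (induction ys) auto

lemma concat_blocks_nth: "e < length ys * (a+1) \<Longrightarrow>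
  concat (map (\<lambda>x. replicate a {} @ [x]) ys) ! e = (if e mod (a+1) = a then ys!(e div (a+1)) else {})"
proof (induction ys arbitrary: e)
  case Nil then show ?case by auto
next
  case (Cons y ys)
  show ?case
  proof (cases "e < a+1")
    case True
    then show ?thesis by (auto simp: nth_append)
  next
    case False
    then have e: "e - (a+1) < length ys * (a+1)" using Cons.prems by auto
    obtain e' where ee: "e = e' + (a+1)" using False by (rule_tac e'="e - (a+1)" in that) auto
    have m: "e mod (a+1) = (e - (a+1)) mod (a+1)" unfolding ee by (simp only: mod_add_self2 add_diff_cancel_right')
    have d: "e div (a+1) = Suc ((e - (a+1)) div (a+1))" unfolding ee by (simp only: div_add_self2 add_diff_cancel_right' Suc_eq_plus1)
    have "concat (map (\<lambda>x. replicate a {} @ [x]) (y#ys)) ! e = concat (map (\<lambda>x. replicate a {} @ [x]) ys) ! (e - (a+1))"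
      using False by (simp add: nth_append)
    then show ?thesis unfolding m d using Cons.IH[OF e] by simp
  qed
qed

locale L4 =
  fixes n :: nat and lt :: "(letter \<times> letter) set" and \<tau> :: "nat \<Rightarrow> letter" and m :: nat
  assumes slo: "strict_linear_order_on (TQ n) lt"
    and tauTQ: "\<forall>i\<in>{1..m}. \<tau> i \<in> TQ n"
    and tauinj: "inj_on \<tau> {1..m}"
begin

abbreviation "al \<equiv> alpha n"
abbreviation "xs \<equiv> enum_list n lt"
abbreviation "E \<equiv> Enum n lt"
abbreviation "N \<equiv> length xs"

definition sl :: "letter \<Rightarrow> nat" where "sl x = (THE k. k < length E \<and> E ! k = x)"

lemma xs_props: "distinct xs" "set xs = TQ n" using enum_list_props[OF slo] by auto

lemma E_len: "length E = N * (al+1) + al"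
  unfolding Enum_def by (simp add: concat_blocks_len)

lemma E_nth: "e < length E \<Longrightarrow> E ! e = (if e < N*(al+1) \<and> e mod (al+1) = al then xs!(e div (al+1)) else {})"
  unfolding Enum_def by (auto simp: nth_append concat_blocks_len concat_blocks_nth)

lemma al_pos: "al \<ge> 1" unfolding alpha_def by simp

lemma TQ_ne: "x \<in> TQ n \<Longrightarrow> x \<noteq> {}" "x \<in> TQ n \<Longrightarrow> Pt \<notin> x" unfolding TQ_def by auto

lemma E_nonempty: assumes "e < length E" "E ! e \<noteq> {}"
  shows "e < N*(al+1)" "e mod (al+1) = al" "E!e = xs!(e div (al+1))" "E!e \<in> TQ n"
proof -
  show 1: "e < N*(al+1)" "e mod (al+1) = al" using assms E_nth by (auto split: if_splits)
  then show 2: "E!e = xs!(e div (al+1))" using E_nth assms by auto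
  have "e div (al+1) < N" using 1 by (simp add: less_mult_imp_div_less)
  then show "E!e \<in> TQ n" using 2 xs_props by auto
qed

lemma slot_pos: "q < N \<Longrightarrow> q*(al+1)+al < length E \<and> E ! (q*(al+1)+al) = xs!q"
proof -
  assume q: "q < N"
  have "(q+1)*(al+1) \<le> N*(al+1)" using q by (intro mult_right_mono) auto
  then have "q*(al+1)+al < N*(al+1)" by (simp add: algebra_simps)
  moreover have "(q*(al+1)+al) mod (al+1) = al" by (rule modh) simp
  moreover have "(q*(al+1)+al) div (al+1) = q" by (rule divh) simp
  ultimately show ?thesis using E_nth E_len by auto
qed

lemma E_uniq: assumes "e < length E" "e' < length E" "E!e = E!e'" "E!e \<noteq> {}" shows "e = e'"
proof -
  have a: "e mod (al+1) = al" "e' mod (al+1) = al" "E!e = xs!(e div (al+1))" "E!e' = xs!(e' div (al+1))"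
    "e < N*(al+1)" "e' < N*(al+1)"
    using E_nonempty assms by metis+
  have "e div (al+1) < N" "e' div (al+1) < N" using a by (simp_all add: less_mult_imp_div_less)
  then have "e div (al+1) = e' div (al+1)" using a assms xs_props(1) nth_eq_iff_index_eq by metis
  then show ?thesis using a by (metis div_mult_mod_eq)
qed

lemma sl_char: assumes "x \<in> TQ n"
  shows "\<exists>q<N. xs!q = x \<and> sl x = q*(al+1)+al"
proof -
  obtain q where q: "q < N" "xs!q = x" using assms xs_props by (metis in_set_conv_nth)
  have "sl x = q*(al+1)+al" unfolding sl_def
  proof (rule the_equality)
    show "q*(al+1)+al < length E \<and> E ! (q*(al+1)+al) = x" using slot_pos q by auto
  next
    fix k assume "k < length E \<and> E ! k = x"
    then show "k = q*(al+1)+al" using E_uniq slot_pos q TQ_ne assms by metis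
  qed
  then show ?thesis using q by auto
qed

lemma sl_E: assumes "e < length E" "E!e \<noteq> {}" shows "sl (E!e) = e"
  unfolding sl_def using E_uniq assms by (intro the_equality) auto

lemma sl_props: assumes "x \<in> TQ n"
  shows "sl x < length E" "E ! sl x = x" "al \<le> sl x" "sl x + al < length E"
    "\<And>p. sl x - al \<le> p \<Longrightarrow> p < sl x \<Longrightarrow> E!p = {}"
    "\<And>p. sl x < p \<Longrightarrow> p \<le> sl x + al \<Longrightarrow> E!p = {}"
    "al < sl x \<Longrightarrow> E!(sl x - al - 1) \<noteq> {}"
proof -
  obtain q where q: "q < N" "xs!q = x" "sl x = q*(al+1)+al" using sl_char assms by auto
  show 1: "sl x < length E" "E ! sl x = x" using slot_pos q by auto
  show "al \<le> sl x" using q by auto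
  have "(q+1)*(al+1) \<le> N*(al+1)" using q by (intro mult_right_mono) auto
  then show 2: "sl x + al < length E" using q E_len by (auto simp: algebra_simps)
  show "E!p = {}" if h: "sl x - al \<le> p" "p < sl x" for p
  proof -
    define d where "d = p - q*(al+1)"
    have "p = q*(al+1) + d" "d < al" using h q unfolding d_def by auto
    then have "p mod (al+1) = d" using modh[of d al q] by simp
    then have "p mod (al+1) \<noteq> al" using \<open>d < al\<close> by auto
    then show ?thesis using E_nth that 1 by auto
  qed
  show "E!p = {}" if h: "sl x < p" "p \<le> sl x + al" for p
  proof -
    define d where "d = p - (q+1)*(al+1)"
    have "p = (q+1)*(al+1) + d" "d < al" using h q unfolding d_def by (auto simp: algebra_simps)
    then have "p mod (al+1) = d" using modh[of d al "q+1"] by simp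
    then have "p mod (al+1) \<noteq> al" using \<open>d < al\<close> by auto
    then show ?thesis using E_nth that 2 by auto
  qed
  show "E!(sl x - al - 1) \<noteq> {}" if "al < sl x"
  proof -
    have q1: "q \<ge> 1" using that q by (cases q) auto
    have "sl x - al - 1 = (q-1)*(al+1)+al" using q q1 by (cases q) (auto simp: algebra_simps)
    then have "E!(sl x - al - 1) = xs!(q-1)" using slot_pos[of "q-1"] q by auto
    moreover have "xs!(q-1) \<in> TQ n" using q xs_props by auto
    ultimately show ?thesis using TQ_ne by auto
  qed
qed

lemma sl_sep: assumes "x \<in> TQ n" "y \<in> TQ n" "sl x < sl y" shows "sl x + al + 1 \<le> sl y"
proof -
  obtain q where q: "sl x = q*(al+1)+al" using sl_char assms by auto
  obtain q' where q': "sl y = q'*(al+1)+al" using sl_char assms by auto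
  have "q < q'" using assms q q' by (metis add_less_cancel_right mult_less_cancel2)
  then have "(q+1)*(al+1) \<le> q'*(al+1)" by (intro mult_right_mono) auto
  then show ?thesis using q q' by (auto simp: algebra_simps)
qed

lemma sl_inj: assumes "x \<in> TQ n" "y \<in> TQ n" "sl x = sl y" shows "x = y"
  using assms sl_props(2) by metis

end


lemma bar_Pt: "Pt \<in> bar x" unfolding bar_def by auto

context L4 begin

abbreviation "I \<equiv> {1..m}"

definition sig :: "nat \<Rightarrow> nat \<Rightarrow> trace" where "sig j i = replicate j {} @ [bar (\<tau> i)] @ E"
definition omg :: "nat \<Rightarrow> nat \<Rightarrow> trace" where "omg j i = replicate j {} @ [bar (\<tau> i)] @ Enum_minus n lt (\<tau> i)"
definition LL :: "nat \<Rightarrow> nat \<Rightarrow> nat" where "LL j i = j + 1 + sl (\<tau> i)"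

lemma Em: "Enum_minus n lt x = take (sl x - al) E @ drop (sl x + 1) E"
  unfolding Enum_minus_def Let_def sl_def by simp

lemma sig_len: "length (sig j i) = j + 1 + length E" unfolding sig_def by simp

lemma sig_nth: "sig j i ! p = (if p < j then {} else if p = j then bar (\<tau> i) else E!(p-j-1))"
  unfolding sig_def by (auto simp: nth_append nth_Cons')

lemma sig_drop_E: "drop (j+1+e) (sig j i) = drop e E" unfolding sig_def by simp

context fixes i assumes iI: "i \<in> I" begin

lemma tiTQ: "\<tau> i \<in> TQ n" using iI tauTQ by auto

lemma omg_len: "length (omg j i) = j + length E - al" "length (sig j i) = length (omg j i) + al + 1"
  "LL j i \<le> length (omg j i)"
  using sl_props[OF tiTQ] unfolding omg_def sig_def LL_def Em by auto

lemma omg_drop: assumes "LL j i - al \<le> q" shows "drop q (omg j i) = drop (q+al+1) (sig j i)"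
proof -
  let ?s = "sl (\<tau> i)"
  have s: "al \<le> ?s" "?s + al < length E" using sl_props[OF tiTQ] by auto
  define X where "X = replicate j {} @ [bar (\<tau> i)] @ take (?s - al) E"
  have "omg j i = X @ drop (?s+1) E"
    unfolding omg_def Em X_def by simp
  moreover have "length X = LL j i - al"
    using s unfolding LL_def X_def by auto
  ultimately have "drop q (omg j i) = drop (q - (LL j i - al)) (drop (?s+1) E)"
    using assms by (simp add: drop_append)
  also have "\<dots> = drop (q + al - j) E"
  proof -
    have "q - (LL j i - al) + (?s + 1) = q + al - j" using assms s unfolding LL_def by auto
    then show ?thesis by (simp only: drop_drop)
  qed
  also have "\<dots> = drop (q+al+1) (sig j i)"
  proof -
    have "q + al + 1 = j + 1 + (q + al - j)" using assms s unfolding LL_def by auto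
    then show ?thesis using sig_drop_E by metis
  qed
  finally show ?thesis .
qed

lemma omg_nth: assumes "p < LL j i" shows "omg j i ! p = sig j i ! p"
proof -
  let ?s = "sl (\<tau> i)"
  have s: "al \<le> ?s" "?s + al < length E" "\<And>p. ?s - al \<le> p \<Longrightarrow> p < ?s \<Longrightarrow> E!p = {}"
    "\<And>p. ?s < p \<Longrightarrow> p \<le> ?s + al \<Longrightarrow> E!p = {}" using sl_props[OF tiTQ] by auto
  show ?thesis
  proof (cases "p < LL j i - al")
    case True
    then show ?thesis using s unfolding omg_def sig_def Em LL_def
      by (auto simp: nth_append nth_Cons')
  next
    case False
    have pl: "p < length (omg j i)" using assms omg_len(3)[of j] by linarith
    have "omg j i ! p = drop p (omg j i) ! 0" using pl by simp
    also have "\<dots> = drop (p+al+1) (sig j i) ! 0" using omg_drop False by simp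
    also have "\<dots> = sig j i ! (p+al+1)" using pl omg_len by simp
    also have "\<dots> = {}" unfolding sig_nth using False assms s(4)[of "p+al-j"] unfolding LL_def by auto
    also have "\<dots> = sig j i ! p" unfolding sig_nth using False assms s(3)[of "p-j-1"] s(1) unfolding LL_def by auto
    finally show ?thesis .
  qed
qed

end

definition W :: "nat \<Rightarrow> trace \<Rightarrow> trace \<Rightarrow> nat \<Rightarrow> bool" where
  "W k a b i = (\<exists>j c. a = drop c (sig j i) \<and> b = drop c (omg j i) \<and> c + k \<le> LL j i)"

definition alive :: "nat \<Rightarrow> trace set \<Rightarrow> trace set \<Rightarrow> nat set" where
  "alive k A B = {i \<in> I. \<exists>a\<in>A. \<exists>b\<in>B. W k a b i}"

lemma alive_fin: "finite (alive k A B)" unfolding alive_def by auto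

lemma W_mono: "W k a b i \<Longrightarrow> k' \<le> k \<Longrightarrow> W k' a b i"
  unfolding W_def by fastforce

lemma W_hd: assumes "i \<in> I" "W k a b i" "1 \<le> k" shows "a \<noteq> [] \<and> b \<noteq> [] \<and> hd a = hd b"
proof -
  obtain j c where jc: "a = drop c (sig j i)" "b = drop c (omg j i)" "c + k \<le> LL j i" using assms W_def by auto
  have l: "c < length (omg j i)" "c < length (sig j i)" using omg_len[OF assms(1), of j] jc assms by auto
  have "hd a = sig j i ! c" using jc l by (simp add: hd_drop_conv_nth)
  moreover have "hd b = omg j i ! c" using jc l by (simp add: hd_drop_conv_nth)
  moreover have "omg j i ! c = sig j i ! c" using omg_nth[OF assms(1)] jc assms by auto
  ultimately show ?thesis using jc l by auto
qed

lemma W_next: assumes "i \<in> I" "W (k+1) a b i" "1 \<le> k"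
  shows "2 \<le> length a \<and> 2 \<le> length b \<and> W k (drop 1 a) (drop 1 b) i"
proof -
  obtain j c where jc: "a = drop c (sig j i)" "b = drop c (omg j i)" "c + (k+1) \<le> LL j i" using assms W_def by auto
  have l: "c + 2 \<le> length (omg j i)" "c + 2 \<le> length (sig j i)" using omg_len[OF assms(1), of j] jc assms by auto
  have "W k (drop 1 a) (drop 1 b) i" unfolding W_def using jc
    by (intro exI[of _ j] exI[of _ "c+1"]) (auto simp: add.commute)
  then show ?thesis using l jc by auto
qed

lemma W_glob: assumes "i \<in> I" "W (k+1) a b i" "k \<le> al" "y < length b"
  shows "(\<exists>y'<length a. W k (drop y' a) (drop y b) i) \<or> (\<exists>y'<length a. drop y b = drop y' a)"
proof -
  obtain j c where jc: "a = drop c (sig j i)" "b = drop c (omg j i)" "c + (k+1) \<le> LL j i" using assms W_def by auto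
  note ol = omg_len[OF assms(1), of j]
  show ?thesis
  proof (cases "c + y + k \<le> LL j i")
    case True
    have "W k (drop y a) (drop y b) i" unfolding W_def using jc True
      by (intro exI[of _ j] exI[of _ "c+y"]) (auto simp: add.commute)
    moreover have "y < length a" using assms jc ol by auto
    ultimately show ?thesis by auto
  next
    case False
    have "drop y b = drop (c+y) (omg j i)" using jc by (simp add: add.commute)
    also have "\<dots> = drop (c+y+al+1) (sig j i)" using omg_drop[OF assms(1)] False assms by auto
    also have "\<dots> = drop (y+al+1) a" using jc by (simp add: algebra_simps)
    finally have "drop y b = drop (y+al+1) a" .
    moreover have "y+al+1 < length a" using assms jc ol by auto
    ultimately show ?thesis by blast
  qed
qed

lemma W_fut: assumes "i \<in> I" "W (k+1) a b i" "x < length a" "1 \<le> k"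
  shows "(\<exists>x'<length b. W k (drop x a) (drop x' b) i) \<or>
     (\<exists>j c. drop x a = drop c (sig j i) \<and> LL j i < c + k \<and> c < length (sig j i))"
proof -
  obtain j c where jc: "a = drop c (sig j i)" "b = drop c (omg j i)" "c + (k+1) \<le> LL j i" using assms W_def by auto
  note ol = omg_len[OF assms(1), of j]
  show ?thesis
  proof (cases "c + x + k \<le> LL j i")
    case True
    have "W k (drop x a) (drop x b) i" unfolding W_def using jc True
      by (intro exI[of _ j] exI[of _ "c+x"]) (auto simp: add.commute)
    moreover have "x < length b" using assms jc ol True by auto
    ultimately show ?thesis by auto
  next
    case False
    then show ?thesis using jc assms by (intro disjI2 exI[of _ j] exI[of _ "c+x"]) (auto simp: add.commute)
  qed
qed

lemma W_bad2: assumes "i \<in> I" "i' \<in> I" "sl (\<tau> i') < sl (\<tau> i)" "k \<le> al"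
   "LL j i < c + k" "c < length (sig j i)" "W (k+1) a' b' i'"
  shows "\<exists>z<length b'. drop c (sig j i) = drop z b'"
proof -
  obtain j' c' where jc: "a' = drop c' (sig j' i')" "b' = drop c' (omg j' i')" "c' + (k+1) \<le> LL j' i'"
    using assms W_def by auto
  have sep: "sl (\<tau> i') + al + 1 \<le> sl (\<tau> i)" using sl_sep tiTQ assms by blast
  define e where "e = c - j - 1"
  have ce: "c = j + 1 + e" "sl (\<tau> i') + 1 \<le> e" "e < length E" using assms sep sig_len unfolding e_def LL_def by auto
  have 1: "drop c (sig j i) = drop e E" using sig_drop_E ce by simp
  define q where "q = j' + e - al"
  have q: "LL j' i' - al \<le> q" "q + al + 1 = j' + 1 + e" "c' < q" using ce sep jc assms unfolding q_def LL_def by auto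
  have "drop q (omg j' i') = drop (j'+1+e) (sig j' i')" using omg_drop[OF assms(2) q(1)] q(2) by simp
  also have "\<dots> = drop e E" by (rule sig_drop_E)
  finally have 2: "drop (q - c') b' = drop e E" using jc q by simp
  have "q < length (omg j' i')" using omg_len[OF assms(2), of j'] sig_len[of j' i'] q ce by linarith
  then have "q - c' < length b'" using jc q by auto
  then show ?thesis using 1 2 by metis
qed

end


lemma ded_pos: "ded n A B k \<Longrightarrow> 1 \<le> k" by (induction rule: ded.induct) auto

lemma fin_suffixes: "finite B \<Longrightarrow> finite (suffixes B)"
proof -
  assume "finite B"
  have "suffixes B = (\<Union>\<sigma>\<in>B. (\<lambda>j. drop j \<sigma>) ` {..<length \<sigma>})" unfolding suffixes_def by auto
  then show ?thesis using \<open>finite B\<close> by auto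
qed

lemma nexts_eq: "nexts A = (\<lambda>\<sigma>. drop 1 \<sigma>) ` {\<sigma>\<in>A. 2 \<le> length \<sigma>}" unfolding nexts_def by auto

lemma fin_nexts: "finite A \<Longrightarrow> finite (nexts A)" unfolding nexts_eq by auto

lemma fin_future: "finite A \<Longrightarrow> finite (future_set f A)" unfolding future_set_def by auto

lemma nexts_card: assumes "finite A" "a \<in> A" "length a < 2" shows "card (nexts A) < card A"
proof -
  have "nexts A \<subseteq> (\<lambda>\<sigma>. drop 1 \<sigma>) ` (A - {a})" unfolding nexts_eq using assms by auto
  then have "card (nexts A) \<le> card (A - {a})" using assms by (meson card_image_le finite_Diff card_mono finite_imageI le_trans)
  also have "\<dots> < card A" using assms by (intro card_Diff1_less) auto
  finally show ?thesis .
qed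

lemma suffix_in: "\<sigma> \<in> B \<Longrightarrow> j < length \<sigma> \<Longrightarrow> drop j \<sigma> \<in> suffixes B" unfolding suffixes_def by auto
lemma future_in: "\<sigma> \<in> A \<Longrightarrow> drop (f \<sigma>) \<sigma> \<in> future_set f A" unfolding future_set_def by auto
lemma nexts_in: "\<sigma> \<in> A \<Longrightarrow> 2 \<le> length \<sigma> \<Longrightarrow> drop 1 \<sigma> \<in> nexts A" unfolding nexts_def by auto

lemma ded_disj: "ded n A B k \<Longrightarrow> finite A \<Longrightarrow> finite B \<Longrightarrow> A \<inter> B = {}"
proof (induction rule: ded.induct)
  case (Atomic \<alpha> A B)
  then show ?case by auto
next
  case (Or A1 B k1 A2 k2)
  then show ?case by auto
next
  case (And A B1 k1 B2 k2)
  then show ?case by auto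
next
  case (Next A B k)
  show ?case
  proof (rule ccontr)
    assume "A \<inter> B \<noteq> {}"
    then obtain a where a: "a \<in> A" "a \<in> B" by auto
    show False
    proof (cases "2 \<le> length a")
      case True
      then show False using Next a fin_nexts nexts_in by blast
    next
      case False
      then show False using nexts_card[of A a] Next a by auto
    qed
  qed
next
  case (WeakNext A B k)
  show ?case
  proof (rule ccontr)
    assume "A \<inter> B \<noteq> {}"
    then obtain a where a: "a \<in> A" "a \<in> B" by auto
    show False
    proof (cases "2 \<le> length a")
      case True
      then show False using WeakNext a fin_nexts nexts_in by blast
    next
      case False
      then show False using nexts_card[of B a] WeakNext a by auto
    qed
  qed
next
  case (Future A f B k)
  show ?case
  proof (rule ccontr)
    assume "A \<inter> B \<noteq> {}"
    then obtain a where a: "a \<in> A" "a \<in> B" by auto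
    then show False using Future fin_future fin_suffixes future_in[of a A f] suffix_in[of a B "f a"] by blast
  qed
next
  case (Globally B f A k)
  show ?case
  proof (rule ccontr)
    assume "A \<inter> B \<noteq> {}"
    then obtain a where a: "a \<in> A" "a \<in> B" by auto
    then show False using Globally fin_future fin_suffixes future_in[of a B f] suffix_in[of a A "f a"] by blast
  qed
qed

context L4 begin

lemma alive_mono: "k' \<le> k \<Longrightarrow> alive k A B \<subseteq> alive k' A B"
  unfolding alive_def using W_mono by blast
lemma alive_UnA: "alive k (A1 \<union> A2) B = alive k A1 B \<union> alive k A2 B"
  unfolding alive_def by blast
lemma alive_UnB: "alive k A (B1 \<union> B2) = alive k A B1 \<union> alive k A B2"
  unfolding alive_def by blast

lemma holds0_hd: "hd a = hd b \<Longrightarrow> holds0 \<alpha> a = holds0 \<alpha> b" by (cases \<alpha>) auto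

lemma main: "ded n A B k \<Longrightarrow> finite A \<Longrightarrow> finite B \<Longrightarrow> k \<le> al \<Longrightarrow> card (alive k A B) < k"
proof (induction rule: ded.induct)
  case (Atomic \<alpha> A B)
  have "alive 1 A B = {}"
  proof (rule ccontr)
    assume "alive 1 A B \<noteq> {}"
    then obtain i a b where "i \<in> I" "a \<in> A" "b \<in> B" "W 1 a b i" unfolding alive_def by auto
    then show False using W_hd[of i 1 a b] holds0_hd[of a b \<alpha>] Atomic by auto
  qed
  then show ?case by simp
next
  case (Or A1 B k1 A2 k2)
  have "alive (k1+k2+1) (A1 \<union> A2) B \<subseteq> alive k1 A1 B \<union> alive k2 A2 B"
    unfolding alive_UnA using alive_mono[of k1 "k1+k2+1" A1 B] alive_mono[of k2 "k1+k2+1" A2 B] by auto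
  then have "card (alive (k1+k2+1) (A1 \<union> A2) B) \<le> card (alive k1 A1 B) + card (alive k2 A2 B)"
    by (meson alive_fin card_Un_le card_mono finite_UnI le_trans)
  then show ?case using Or by auto
next
  case (And A B1 k1 B2 k2)
  have "alive (k1+k2+1) A (B1 \<union> B2) \<subseteq> alive k1 A B1 \<union> alive k2 A B2"
    unfolding alive_UnB using alive_mono[of k1 "k1+k2+1" A B1] alive_mono[of k2 "k1+k2+1" A B2] by auto
  then have "card (alive (k1+k2+1) A (B1 \<union> B2)) \<le> card (alive k1 A B1) + card (alive k2 A B2)"
    by (meson alive_fin card_Un_le card_mono finite_UnI le_trans)
  then show ?case using And by auto
next
  case (Next A B k)
  have k1: "1 \<le> k" using ded_pos Next by blast
  have "alive (k+1) A B \<subseteq> alive k (nexts A) (nexts B)"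
    unfolding alive_def using W_next[OF _ _ k1] nexts_in by blast
  then have "card (alive (k+1) A B) \<le> card (alive k (nexts A) (nexts B))"
    by (simp add: alive_fin card_mono)
  then show ?case using Next fin_nexts by fastforce
next
  case (WeakNext A B k)
  have k1: "1 \<le> k" using ded_pos WeakNext by blast
  have "alive (k+1) A B \<subseteq> alive k (nexts A) (nexts B)"
    unfolding alive_def using W_next[OF _ _ k1] nexts_in by blast
  then have "card (alive (k+1) A B) \<le> card (alive k (nexts A) (nexts B))"
    by (simp add: alive_fin card_mono)
  then show ?case using WeakNext fin_nexts by fastforce
next
  case (Future A f B k)
  have k1: "1 \<le> k" using ded_pos[OF Future.hyps(2)] .
  have fA: "finite (future_set f A)" "finite (suffixes B)" using fin_future[OF Future.prems(1)] fin_suffixes[OF Future.prems(2)] .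
  have disj: "future_set f A \<inter> suffixes B = {}" using ded_disj[OF Future.hyps(2) fA] .
  let ?X = "alive (k+1) A B" and ?Y = "alive k (future_set f A) (suffixes B)"
  have bad: "\<exists>a\<in>A. \<exists>j c. drop (f a) a = drop c (sig j i) \<and> LL j i < c + k \<and> c < length (sig j i)"
    if h0: "i \<in> ?X - ?Y" for i
  proof -
    obtain a b where ab: "i \<in> I" "a \<in> A" "b \<in> B" "W (k+1) a b i" using h0 unfolding alive_def by auto
    have "f a < length a" using Future.hyps(1) ab(2) by auto
    from W_fut[OF ab(1) ab(4) this k1] show ?thesis
    proof
      assume "\<exists>x'<length b. W k (drop (f a) a) (drop x' b) i"
      then obtain x' where x': "x' < length b" "W k (drop (f a) a) (drop x' b) i" by blast
      have "drop (f a) a \<in> future_set f A" "drop x' b \<in> suffixes B" using future_in[OF ab(2)] suffix_in[OF ab(3) x'(1)] .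
      then have "i \<in> ?Y" unfolding alive_def using ab(1) x'(2) by blast
      then show ?thesis using h0 by auto
    qed (use ab in auto)
  qed
  have one: "i = i'" if h: "i \<in> ?X - ?Y" "i' \<in> ?X - ?Y" for i i'
  proof (rule ccontr)
    assume ne: "i \<noteq> i'"
    have iI: "i \<in> I" "i' \<in> I" using h unfolding alive_def by auto
    have "sl (\<tau> i) \<noteq> sl (\<tau> i')"
    proof
      assume "sl (\<tau> i) = sl (\<tau> i')"
      then have "\<tau> i = \<tau> i'" by (rule sl_inj[OF tiTQ[OF iI(1)] tiTQ[OF iI(2)]])
      then show False using ne iI tauinj by (auto dest: inj_onD)
    qed
    then consider "sl (\<tau> i') < sl (\<tau> i)" | "sl (\<tau> i) < sl (\<tau> i')" by linarith
    then show False
    proof cases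
      case 1
      obtain a j c where b: "a \<in> A" "drop (f a) a = drop c (sig j i)" "LL j i < c + k" "c < length (sig j i)"
        using bad h(1) by blast
      obtain a' b' where w: "b' \<in> B" "W (k+1) a' b' i'" using h(2) unfolding alive_def by auto
      obtain z where "z < length b'" "drop c (sig j i) = drop z b'" using W_bad2[OF iI 1 _ b(3,4) w(2)] Future by auto
      then show False using disj b w future_in[of a A f] suffix_in[of b' B z] by auto
    next
      case 2
      obtain a j c where b: "a \<in> A" "drop (f a) a = drop c (sig j i')" "LL j i' < c + k" "c < length (sig j i')"
        using bad h(2) by blast
      obtain a' b' where w: "b' \<in> B" "W (k+1) a' b' i" using h(1) unfolding alive_def by auto
      obtain z where "z < length b'" "drop c (sig j i') = drop z b'" using W_bad2[OF iI(2,1) 2 _ b(3,4) w(2)] Future by auto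
      then show False using disj b w future_in[of a A f] suffix_in[of b' B z] by auto
    qed
  qed
  have "card (?X - ?Y) \<le> 1" using one by (simp add: card_le_Suc0_iff_eq alive_fin)
  moreover have "?X \<subseteq> ?Y \<union> (?X - ?Y)" by auto
  then have "card ?X \<le> card ?Y + card (?X - ?Y)"
    by (meson alive_fin card_Un_le card_mono finite_UnI finite_Diff le_trans)
  moreover have "card ?Y < k" using Future.IH[OF fA] Future.prems(3) by simp
  ultimately show ?case by auto
next
  case (Globally B f A k)
  have fB: "finite (suffixes A)" "finite (future_set f B)" using fin_suffixes[OF Globally.prems(1)] fin_future[OF Globally.prems(2)] .
  have disj: "suffixes A \<inter> future_set f B = {}" using ded_disj[OF Globally.hyps(2) fB] .
  have "alive (k+1) A B \<subseteq> alive k (suffixes A) (future_set f B)"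
  proof
    fix i assume "i \<in> alive (k+1) A B"
    then obtain a b where ab: "i \<in> I" "a \<in> A" "b \<in> B" "W (k+1) a b i" unfolding alive_def by auto
    have "f b < length b" using Globally.hyps(1) ab(3) by auto
    from W_glob[OF ab(1) ab(4) _ this] Globally.prems(3) consider
      "\<exists>y'<length a. W k (drop y' a) (drop (f b) b) i" | "\<exists>y'<length a. drop (f b) b = drop y' a" by auto
    then show "i \<in> alive k (suffixes A) (future_set f B)"
    proof cases
      case 1
      then obtain y' where y': "y' < length a" "W k (drop y' a) (drop (f b) b) i" by blast
      have "drop y' a \<in> suffixes A" "drop (f b) b \<in> future_set f B" using suffix_in[OF ab(2) y'(1)] future_in[OF ab(3)] .
      then show ?thesis unfolding alive_def using ab(1) y'(2) by blast
    next
      case 2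
      then obtain y' where y': "y' < length a" "drop (f b) b = drop y' a" by blast
      have "drop y' a \<in> suffixes A" "drop (f b) b \<in> future_set f B" using suffix_in[OF ab(2) y'(1)] future_in[OF ab(3)] .
      then show ?thesis using disj y'(2) by auto
    qed
  qed
  then have "card (alive (k+1) A B) \<le> card (alive k (suffixes A) (future_set f B))"
    by (simp add: alive_fin card_mono)
  then show ?case using Globally.IH[OF fB] Globally.prems(3) by simp
qed

end


lemma drop_rep_app: "u \<le> j \<Longrightarrow> drop (j - u) (replicate j {} @ Y) = replicate u {} @ Y"
  by (simp add: drop_append)

context L4 begin

lemma canon:
  assumes x: "x = drop p (replicate j1 {} @ [\<beta>] @ E)" and pl: "p < length (replicate j1 {} @ [\<beta>] @ E)"
    and b: "Pt \<in> \<beta>" and xf: "x = replicate u {} @ [\<rho>] @ x'" and rne: "\<rho> \<noteq> {}"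
  shows "x = (if Pt \<in> \<rho> then replicate u {} @ [\<rho>] @ E else drop (sl \<rho> - u) E)"
proof -
  define X where "X = replicate j1 {} @ [\<beta>] @ E"
  have Xn: "X ! q = (if q < j1 then {} else if q = j1 then \<beta> else E!(q-j1-1))" for q
    unfolding X_def by (auto simp: nth_append nth_Cons')
  have xX: "x = drop p X" using x X_def by simp
  have pX: "p < length X" using pl X_def by simp
  have lx: "length x = length X - p" using xX by simp
  have xv: "x ! v = X ! (p+v)" if "v < length x" for v using that xX pX by simp
  have ulx: "u < length x" using xf by simp
  have xu: "x ! u = \<rho>" using xf by (simp add: nth_append)
  have xz: "x ! v = {}" if "v < u" for v using xf that by (simp add: nth_append)
  consider "p + u < j1" | "p + u = j1" | "j1 < p + u" by linarith
  then show ?thesis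
  proof cases
    case 1
    then show ?thesis using xv[OF ulx] xu Xn rne by auto
  next
    case 2
    then have "\<rho> = \<beta>" using xv[OF ulx] xu Xn by auto
    moreover have "x = replicate u {} @ [\<beta>] @ E" using x 2 drop_rep_app[of u j1 "[\<beta>] @ E"] by simp
    ultimately show ?thesis using b by simp
  next
    case 3
    have pj: "j1 < p"
    proof (rule ccontr)
      assume "\<not> j1 < p"
      then have "j1 - p < u" "j1 - p < length x" using 3 ulx by auto
      then show False using xz[of "j1 - p"] xv[of "j1 - p"] Xn b \<open>\<not> j1 < p\<close> by auto
    qed
    have e: "p + u - j1 - 1 < length E" using ulx lx X_def 3 by auto
    have r: "\<rho> = E ! (p + u - j1 - 1)" using xv[OF ulx] xu Xn 3 by auto
    then have "\<rho> \<in> TQ n" using E_nonempty(4)[OF e] rne by auto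
    then have "Pt \<notin> \<rho>" using TQ_ne by auto
    moreover have "sl \<rho> = p + u - j1 - 1" using sl_E[OF e] r rne by auto
    moreover have "x = drop (p - j1 - 1) E"
    proof -
      have "X = (replicate j1 {} @ [\<beta>]) @ E" unfolding X_def by simp
      then have "drop p X = drop (p - length (replicate j1 {} @ [\<beta>])) E" using pj by (simp only: drop_append) simp
      then show ?thesis using xX by simp
    qed
    ultimately show ?thesis using pj by auto
  qed
qed

lemma TQTP_ne: "\<rho> \<in> TQ n \<union> TP n \<Longrightarrow> \<rho> \<noteq> {}" unfolding TQ_def TP_def by auto

lemma root:
  assumes iI: "i \<in> I" and rl: "c < length (omg j i)" and aA: "a \<in> suffixes (Acal n lt)"
    and ap: "approx n a (drop c (omg j i))"
  shows "a = drop c (omg j i) \<or> (a = drop c (sig j i) \<and> c + al < LL j i)"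
proof -
  let ?b = "drop c (omg j i)"
  obtain u \<rho> s1 s2 where us: "\<rho> \<in> TQ n \<union> TP n" "a = replicate u {} @ [\<rho>] @ replicate al {} @ s1"
    "?b = replicate u {} @ [\<rho>] @ replicate al {} @ s2" using ap unfolding approx_def by blast
  have rne: "\<rho> \<noteq> {}" using TQTP_ne us by auto
  obtain p j1 \<tau>' where aa: "a = drop p (replicate j1 {} @ [bar \<tau>'] @ E)" "p < length (replicate j1 {} @ [bar \<tau>'] @ E)"
    using aA unfolding suffixes_def Acal_def by auto
  have ca: "a = (if Pt \<in> \<rho> then replicate u {} @ [\<rho>] @ E else drop (sl \<rho> - u) E)"
    by (rule canon[OF aa bar_Pt us(2) rne])
  note ol = omg_len[OF iI, of j]
  show ?thesis
  proof (cases "LL j i - al \<le> c")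
    case True
    have bb: "?b = drop (c+al+1) (sig j i)" using omg_drop[OF iI True] .
    have "?b = (if Pt \<in> \<rho> then replicate u {} @ [\<rho>] @ E else drop (sl \<rho> - u) E)"
      by (rule canon[OF bb[unfolded sig_def]]) (use rl ol sig_len[of j i] bar_Pt us(3) rne in \<open>auto simp: sig_def\<close>)
    then show ?thesis using ca by auto
  next
    case False
    let ?s = "sl (\<tau> i)"
    have s: "al \<le> ?s" "al < ?s \<Longrightarrow> E!(?s - al - 1) \<noteq> {}" using sl_props[OF tiTQ[OF iI]] by auto
    have cu: "c + u < LL j i - al"
    proof (rule ccontr)
      assume "\<not> c + u < LL j i - al"
      define v where "v = LL j i - al - 1 - c"
      have v: "v < u" "c + v = LL j i - al - 1" using False \<open>\<not> c + u < LL j i - al\<close> unfolding v_def by auto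
      have "?b ! v = {}" using us(3) v by (simp add: nth_append)
      moreover have "?b ! v = omg j i ! (c+v)" using rl v ol unfolding LL_def by auto
      moreover have "omg j i ! (c+v) = sig j i ! (c+v)" using omg_nth[OF iI] v unfolding LL_def by auto
      moreover have "sig j i ! (LL j i - al - 1) \<noteq> {}"
      proof (cases "al < ?s")
        case True
        then show ?thesis using s unfolding sig_nth LL_def by auto
      next
        case False
        then have "LL j i - al - 1 = j" using s unfolding LL_def by auto
        then show ?thesis unfolding sig_nth using bar_Pt by auto
      qed
      ultimately show False using v by auto
    qed
    have tk: "take (u+1) (drop c (sig j i)) = take (u+1) ?b"
    proof (rule nth_equalityI)
      show "length (take (u+1) (drop c (sig j i))) = length (take (u+1) ?b)"
        using us(3) cu ol sig_len[of j i] unfolding LL_def by auto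
    next
      fix v assume "v < length (take (u+1) (drop c (sig j i)))"
      then have v: "v \<le> u" "c + v < length (sig j i)" by auto
      then have "c + v < LL j i" using cu by auto
      then show "take (u+1) (drop c (sig j i)) ! v = take (u+1) ?b ! v"
        using omg_nth[OF iI] v rl ol cu by auto
    qed
    have "take (u+1) ?b = replicate u {} @ [\<rho>]" using us(3) by simp
    then have dsig: "drop c (sig j i) = replicate u {} @ [\<rho>] @ drop (u+1) (drop c (sig j i))"
      using tk by (metis append_assoc append_take_drop_id)
    have "drop c (sig j i) = (if Pt \<in> \<rho> then replicate u {} @ [\<rho>] @ E else drop (sl \<rho> - u) E)"
      by (rule canon[OF _ _ bar_Pt dsig rne]) (use rl ol in \<open>auto simp: sig_def\<close>)
    then show ?thesis using ca False by auto
  qed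
qed

end


lemma alpha_big: "2 ^ (n+1) < alpha n"
proof -
  have "(2::nat) ^ (n+1) * 1 < 2 ^ (n+1) * (n+2)^2"
    by (intro mult_strict_left_mono) (auto simp: power2_eq_square)
  then show ?thesis unfolding alpha_def by simp
qed

theorem lemma4:
  fixes n m :: nat and lt :: "(letter \<times> letter) set"
    and r t :: "nat \<Rightarrow> nat" and \<tau> :: "nat \<Rightarrow> letter"
    and A :: "trace set"
  assumes "n \<ge> 1"
    and "strict_linear_order_on (TQ n) lt"
    and "\<forall>i\<in>{1..m}. \<tau> i \<in> TQ n"
    and "inj_on \<tau> {1..m}"
    and "\<forall>i\<in>{1..m}. r i < length (replicate (t i) {} @ [bar (\<tau> i)] @ Enum_minus n lt (\<tau> i))"
    and "finite A"
    and "A \<subseteq> suffixes (Acal n lt)"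
  shows "\<forall>B C k. B = {drop (r i) (replicate (t i) {} @ [bar (\<tau> i)] @ Enum_minus n lt (\<tau> i)) | i. i \<in> {1..m}}
            \<longrightarrow> C = {(a, b). a \<in> A \<and> b \<in> B \<and> approx n a b}
            \<longrightarrow> ded n A B k \<longrightarrow> card C + 1 \<le> k"
proof (intro allI impI)
  fix B C k
  assume B: "B = {drop (r i) (replicate (t i) {} @ [bar (\<tau> i)] @ Enum_minus n lt (\<tau> i)) | i. i \<in> {1..m}}"
    and C: "C = {(a, b). a \<in> A \<and> b \<in> B \<and> approx n a b}" and d: "ded n A B k"
  interpret L: L4 n lt \<tau> m using assms(2,3,4) by unfold_locales
  have B': "B = (\<lambda>i. drop (r i) (L.omg (t i) i)) ` {1..m}" unfolding B L.omg_def by auto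
  have fB: "finite B" unfolding B' by auto
  have disj: "A \<inter> B = {}" using ded_disj[OF d assms(6) fB] .
  define g where "g i = (drop (r i) (L.sig (t i) i), drop (r i) (L.omg (t i) i))" for i
  define I' where "I' = {i \<in> {1..m}. g i \<in> C \<and> r i + alpha n < L.LL (t i) i}"
  have CI: "C \<subseteq> g ` I'"
  proof
    fix p assume "p \<in> C"
    then obtain a b where ab: "p = (a,b)" "a \<in> A" "b \<in> B" "approx n a b" using C by auto
    then obtain i where i: "i \<in> {1..m}" "b = drop (r i) (L.omg (t i) i)" using B' by auto
    have rl: "r i < length (L.omg (t i) i)" using assms(5) i(1) unfolding L.omg_def by auto
    have "a = b \<or> (a = drop (r i) (L.sig (t i) i) \<and> r i + alpha n < L.LL (t i) i)"
      using L.root[OF i(1) rl _ ab(4)[unfolded i(2)]] ab(2) assms(7) i(2) by auto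
    then have "a = drop (r i) (L.sig (t i) i) \<and> r i + alpha n < L.LL (t i) i" using disj ab by auto
    then have "p = g i" "i \<in> I'" using ab i \<open>p \<in> C\<close> unfolding g_def I'_def by auto
    then show "p \<in> g ` I'" by auto
  qed
  have fI: "finite I'" unfolding I'_def by auto
  have cC: "card C \<le> card I'" using CI fI by (meson card_image_le card_mono finite_imageI le_trans)
  show "card C + 1 \<le> k"
  proof (cases "k \<le> alpha n")
    case True
    have "I' \<subseteq> L.alive k A B"
    proof
      fix i assume "i \<in> I'"
      then have i: "i \<in> {1..m}" "g i \<in> C" "r i + alpha n < L.LL (t i) i" unfolding I'_def by auto
      have "L.W k (drop (r i) (L.sig (t i) i)) (drop (r i) (L.omg (t i) i)) i"
        unfolding L.W_def using i(3) True by (intro exI[of _ "t i"] exI[of _ "r i"]) auto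
      moreover have "drop (r i) (L.sig (t i) i) \<in> A" "drop (r i) (L.omg (t i) i) \<in> B"
        using i(2) C unfolding g_def by auto
      ultimately show "i \<in> L.alive k A B" unfolding L.alive_def using i(1) by blast
    qed
    then have "card I' \<le> card (L.alive k A B)" using L.alive_fin by (simp add: card_mono)
    moreover have "card (L.alive k A B) < k" using L.main[OF d assms(6) fB True] .
    ultimately show ?thesis using cC by auto
  next
    case False
    have "I' \<subseteq> {1..m}" unfolding I'_def by auto
    then have "card I' \<le> card {1..m}" by (intro card_mono) auto
    then have "card I' \<le> m" by simp
    moreover have "m = card (\<tau> ` {1..m})" using assms(4) by (simp add: card_image)
    moreover have "card (\<tau> ` {1..m}) \<le> card (TQ n)" using assms(3) TQ_finite by (intro card_mono) auto
    ultimately have "card C \<le> 2 ^ (n+1)" using cC TQ_card[of n] by linarith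
    then show ?thesis using alpha_big[of n] False by linarith
  qed
qed


end
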